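(* For every $t\geq 0$ let $Q_t$, $M_t$ and $\psi_t$ be real random variables (on a common probability space) such that $M_t\neq 0$ almost surely and $\psi_t$ is independent of $(Q_t,M_t)$. Suppose $\psi$ is a real random variable satisfying \[ \psi = Q_t + M_t\,\psi_t \quad \text{for all } t\geq 0, \] and such that $\psi$ has the same distribution as $\psi_t$ for all $t\geq 0$, and suppose further that $Q_t\to\psi$ in probability as $t\to\infty$. Then the distribution of $\psi$ has an atom if and only if $\psi$ is almost surely equal to a constant. *)

theory Defs
  imports "HOL-Probability.Probability"
begin

definition conv_in_prob :: "'a measure \<Rightarrow> (real \<Rightarrow> 'a \<Rightarrow> real) \<Rightarrow> ('a \<Rightarrow> real) \<Rightarrow> bool" where
  "conv_in_prob M X Y \<longleftrightarrow>
     (\<forall>e>0. ((\<lambda>t. measure M {x \<in> space M. \<bar>X t x - Y x\<bar> > e}) \<longlongrightarrow> 0) at_top)"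

definition has_atom :: "real measure \<Rightarrow> bool" where
  "has_atom \<mu> \<longleftrightarrow> (\<exists>c. measure \<mu> {c} > 0)"

text \<open>Independence of two random variables with possibly different codomain types
  (the library's indep_var requires equal codomain types); this is exactly the right-hand
  side of the library lemma prob_space.indep_var_eq.\<close>
definition indep_rv :: "'a measure \<Rightarrow> 'b measure \<Rightarrow> ('a \<Rightarrow> 'b) \<Rightarrow> 'c measure \<Rightarrow> ('a \<Rightarrow> 'c) \<Rightarrow> bool" where
  "indep_rv M S X T Y \<longleftrightarrow>
     X \<in> measurable M S \<and> Y \<in> measurable M T \<and>
     prob_space.indep_set M
       (sigma_sets (space M) {X -` A \<inter> space M | A. A \<in> sets S})
       (sigma_sets (space M) {Y -` A \<inter> space M | A. A \<in> sets T})"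

end

theory Submission
  imports Defs
begin

lemma indep_rv_prod:
  assumes P: "prob_space M" and I: "indep_rv M S X T Y"
  shows "distr M (T \<Otimes>\<^sub>M S) (\<lambda>x. (Y x, X x)) = distr M T Y \<Otimes>\<^sub>M distr M S X"
proof -
  interpret prob_space M by fact
  have X: "X \<in> measurable M S" and Y: "Y \<in> measurable M T"
    and ind: "indep_set (sigma_sets (space M) {X -` A \<inter> space M | A. A \<in> sets S})
       (sigma_sets (space M) {Y -` A \<inter> space M | A. A \<in> sets T})"
    using I unfolding indep_rv_def by auto
  interpret pY: prob_space "distr M T Y" using Y by (rule prob_space_distr)
  interpret pX: prob_space "distr M S X" using X by (rule prob_space_distr)
  show ?thesis
  proof (rule pair_measure_eqI[symmetric])
    show "sigma_finite_measure (distr M T Y)" by unfold_locales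
    show "sigma_finite_measure (distr M S X)" by unfold_locales
    show "sets (distr M T Y \<Otimes>\<^sub>M distr M S X) = sets (distr M (T \<Otimes>\<^sub>M S) (\<lambda>x. (Y x, X x)))"
      by simp
    fix A B assume A: "A \<in> sets (distr M T Y)" and B: "B \<in> sets (distr M S X)"
    have AB: "A \<times> B \<in> sets (T \<Otimes>\<^sub>M S)" using A B by auto
    have m: "(\<lambda>x. (Y x, X x)) \<in> measurable M (T \<Otimes>\<^sub>M S)" using X Y by measurable
    have e1: "X -` B \<inter> space M \<in> sigma_sets (space M) {X -` A \<inter> space M | A. A \<in> sets S}"
      using B by (intro sigma_sets.Basic) auto
    have e2: "Y -` A \<inter> space M \<in> sigma_sets (space M) {Y -` A \<inter> space M | A. A \<in> sets T}"
      using A by (intro sigma_sets.Basic) auto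
    have "(\<lambda>x. (Y x, X x)) -` (A \<times> B) \<inter> space M = (X -` B \<inter> space M) \<inter> (Y -` A \<inter> space M)"
      by auto
    then have "emeasure (distr M (T \<Otimes>\<^sub>M S) (\<lambda>x. (Y x, X x))) (A \<times> B)
       = ennreal (prob (X -` B \<inter> space M) * prob (Y -` A \<inter> space M))"
      using emeasure_distr[OF m AB] indep_setD[OF ind e1 e2] by (simp add: emeasure_eq_measure)
    also have "\<dots> = emeasure (distr M T Y) A * emeasure (distr M S X) B"
      using A B X Y by (simp add: emeasure_distr emeasure_eq_measure ennreal_mult' mult.commute)
    finally show "emeasure (distr M T Y) A * emeasure (distr M S X) B =
      emeasure (distr M (T \<Otimes>\<^sub>M S) (\<lambda>x. (Y x, X x))) (A \<times> B)" by simp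
  qed
qed

lemma max_atom:
  fixes N :: "real measure"
  assumes "prob_space N" and "measure N {c0} > 0" and "sets N = sets borel"
  shows "\<exists>c. (\<forall>a. measure N {a} \<le> measure N {c}) \<and> finite {a. measure N {a} = measure N {c}}
           \<and> measure N {c} > 0"
proof -
  have sing: "\<And>a. {a} \<in> sets N" unfolding assms(3) by (intro borel_closed closed_singleton)
  interpret prob_space N by fact
  have fin: "finite {a. measure N {a} > d}" if d: "d > 0" for d
  proof (rule ccontr)
    assume "infinite {a. measure N {a} > d}"
    then obtain B where B: "finite B" "card B = nat (ceiling (1/d)) + 1" "B \<subseteq> {a. measure N {a} > d}"
      using infinite_arbitrarily_large by blast
    have "measure N B = (\<Sum>a\<in>B. measure N {a})"
      using B(1) sing by (rule finite_measure_eq_sum_singleton)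
    also have "\<dots> \<ge> (\<Sum>a\<in>B. d)" using B(3) by (intro sum_mono) auto
    finally have "(\<Sum>a\<in>B. d) \<le> 1" using prob_le_1[of B] by linarith
    then have le: "real (card B) * d \<le> 1" by simp
    have "1/d \<le> real (nat (ceiling (1/d)))" by (rule real_nat_ceiling_ge)
    then have "real (card B) > 1/d" using B(2) by simp
    then have "real (card B) * d > (1/d) * d" using d by (intro mult_strict_right_mono)
    then show False using le d by simp
  qed
  define w where "w a = measure N {a}" for a
  define G where "G = {a. w a \<ge> w c0}"
  have Gf: "finite G"
    by (rule finite_subset[OF _ fin[of "w c0 / 2"]]) (use assms(2) in \<open>auto simp: G_def w_def\<close>)
  have Gn: "c0 \<in> G" by (simp add: G_def)
  define p where "p = Max (w ` G)"
  have "p \<in> w ` G" unfolding p_def using Gf Gn by (intro Max_in) auto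
  then obtain c where c: "c \<in> G" "w c = p" by auto
  have cmax: "w a \<le> w c" if "a \<in> G" for a
    using c Gf that unfolding p_def by (metis Max_ge finite_imageI imageI)
  have pos: "w c > 0" using c(1) assms(2) by (simp add: G_def w_def)
  have all: "w a \<le> w c" for a
  proof (cases "a \<in> G")
    case True then show ?thesis by (rule cmax)
  next
    case False then have "w a < w c0" by (simp add: G_def)
    also have "w c0 \<le> w c" using cmax Gn by blast
    finally show ?thesis by simp
  qed
  have "finite {a. w a = w c}"
    by (rule finite_subset[OF _ fin[of "w c / 2"]]) (use pos in \<open>auto simp: w_def\<close>)
  then show ?thesis using all pos unfolding w_def by blast
qed

lemma indep_rv_events:
  assumes P: "prob_space M" and I: "indep_rv M S X T Y" and A: "A \<in> sets S" and B: "B \<in> sets T"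
  shows "measure M {x\<in>space M. X x \<in> A \<and> Y x \<in> B} =
         measure M {x\<in>space M. X x \<in> A} * measure M {x\<in>space M. Y x \<in> B}"
proof -
  interpret prob_space M by fact
  have ind: "indep_set (sigma_sets (space M) {X -` A \<inter> space M | A. A \<in> sets S})
       (sigma_sets (space M) {Y -` A \<inter> space M | A. A \<in> sets T})"
    using I unfolding indep_rv_def by auto
  have e1: "X -` A \<inter> space M \<in> sigma_sets (space M) {X -` A \<inter> space M | A. A \<in> sets S}"
    using A by (intro sigma_sets.Basic) auto
  have e2: "Y -` B \<inter> space M \<in> sigma_sets (space M) {Y -` A \<inter> space M | A. A \<in> sets T}"
    using B by (intro sigma_sets.Basic) auto
  have "{x\<in>space M. X x \<in> A \<and> Y x \<in> B} = (X -` A \<inter> space M) \<inter> (Y -` B \<inter> space M)" by auto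
  moreover have "{x\<in>space M. X x \<in> A} = X -` A \<inter> space M" by auto
  moreover have "{x\<in>space M. Y x \<in> B} = Y -` B \<inter> space M" by auto
  ultimately show ?thesis using indep_setD[OF ind e1 e2] by simp
qed

lemma AE_zero_small:
  assumes P: "prob_space M" and f: "f \<in> borel_measurable M"
    and h: "\<And>e. e > 0 \<Longrightarrow> measure M {x\<in>space M. e < \<bar>f x\<bar>} = 0"
  shows "AE x in M. f x = (0::real)"
proof -
  interpret prob_space M by fact
  have N: "(\<Union>n. {x\<in>space M. 1 / Suc n < \<bar>f x\<bar>}) \<in> null_sets M"
  proof (intro null_sets_UN)
    fix n :: nat
    have s: "{x\<in>space M. 1 / Suc n < \<bar>f x\<bar>} \<in> sets M" using f by measurable
    then show "{x\<in>space M. 1 / Suc n < \<bar>f x\<bar>} \<in> null_sets M"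
      using h[of "1 / Suc n"] by (simp add: null_sets_def emeasure_eq_measure)
  qed
  show ?thesis
  proof (rule AE_I'[OF N])
    show "{x \<in> space M. \<not> f x = 0} \<subseteq> (\<Union>n. {x\<in>space M. 1 / Suc n < \<bar>f x\<bar>})"
    proof safe
      fix x assume x: "x \<in> space M" "f x \<noteq> 0"
      then obtain n :: nat where "inverse (real (Suc n)) < \<bar>f x\<bar>"
        using reals_Archimedean[of "\<bar>f x\<bar>"] by auto
      then have "1 / Suc n < \<bar>f x\<bar>" by (simp add: inverse_eq_divide)
      then show "x \<in> (\<Union>n. {x\<in>space M. 1 / Suc n < \<bar>f x\<bar>})" using x by auto
    qed
  qed
qed


theorem lemma2p1:
  fixes M :: "'a measure"
    and Q Mt \<psi>t :: "real \<Rightarrow> 'a \<Rightarrow> real"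
    and \<psi> :: "'a \<Rightarrow> real"
  assumes "prob_space M"
    and "\<psi> \<in> borel_measurable M"
    and "\<And>t. t \<ge> 0 \<Longrightarrow> Q t \<in> borel_measurable M"
    and "\<And>t. t \<ge> 0 \<Longrightarrow> Mt t \<in> borel_measurable M"
    and "\<And>t. t \<ge> 0 \<Longrightarrow> \<psi>t t \<in> borel_measurable M"
    and "\<And>t. t \<ge> 0 \<Longrightarrow> AE x in M. Mt t x \<noteq> 0"
    and "\<And>t. t \<ge> 0 \<Longrightarrow>
           indep_rv M borel (\<psi>t t) (borel \<Otimes>\<^sub>M borel) (\<lambda>x. (Q t x, Mt t x))"
    and "\<And>t. t \<ge> 0 \<Longrightarrow> AE x in M. \<psi> x = Q t x + Mt t x * \<psi>t t x"
    and "\<And>t. t \<ge> 0 \<Longrightarrow> distr M borel \<psi> = distr M borel (\<psi>t t)"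
    and "conv_in_prob M Q \<psi>"
  shows "has_atom (distr M borel \<psi>) \<longleftrightarrow> (\<exists>c. AE x in M. \<psi> x = c)"
proof -
  interpret prob_space M by fact
  note psim = assms(2) and Qm = assms(3) and Mm = assms(4) and ptm = assms(5)
    and Mnz = assms(6) and ind = assms(7) and eq = assms(8) and dist = assms(9)
  have conv: "((\<lambda>t. prob {x \<in> space M. e < \<bar>Q t x - \<psi> x\<bar>}) \<longlongrightarrow> 0) at_top" if "e > 0" for e
    using assms(10) that unfolding conv_in_prob_def by blast
  define \<mu> where "\<mu> = distr M borel \<psi>"
  interpret mu: prob_space \<mu> unfolding \<mu>_def using psim by (rule prob_space_distr)
  have mu_meas: "measure \<mu> A = prob {x\<in>space M. \<psi> x \<in> A}" if "A \<in> sets borel" for A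
    unfolding \<mu>_def using psim that by (subst measure_distr) (auto intro!: arg_cong[where f=prob])
  have mu_meas_t: "measure \<mu> A = prob {x\<in>space M. \<psi>t t x \<in> A}" if "A \<in> sets borel" "t \<ge> 0" for A t
    unfolding \<mu>_def dist[OF that(2)] using ptm[OF that(2)] that
    by (subst measure_distr) (auto intro!: arg_cong[where f=prob])
  show ?thesis
  proof
    assume "\<exists>c. AE x in M. \<psi> x = c"
    then obtain c where c: "AE x in M. \<psi> x = c" by blast
    have "prob {x\<in>space M. \<psi> x = c} = 1"
      using c psim by (subst prob_Collect_eq_1) auto
    then have "measure \<mu> {c} = 1" using mu_meas[of "{c}"] by simp
    then show "has_atom (distr M borel \<psi>)" unfolding has_atom_def \<mu>_def[symmetric] by (intro exI[of _ c]) simp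
  next
    assume "has_atom (distr M borel \<psi>)"
    then obtain c0 where c0: "measure \<mu> {c0} > 0" unfolding has_atom_def \<mu>_def by blast
    show "\<exists>c. AE x in M. \<psi> x = c"
    proof (cases "AE x in M. \<psi> x = 0")
      case True then show ?thesis by blast
    next
      case False
      then obtain \<delta> where \<delta>: "\<delta> > 0" and \<eta>pos: "prob {x\<in>space M. \<delta> < \<bar>\<psi> x\<bar>} \<noteq> 0"
        using AE_zero_small[OF assms(1) psim] by blast
      define \<eta> where "\<eta> = prob {x\<in>space M. \<delta> < \<bar>\<psi> x\<bar>}"
      have \<eta>: "\<eta> > 0" using \<eta>pos unfolding \<eta>_def by (simp add: zero_less_measure_iff)
      have \<eta>t: "prob {x\<in>space M. \<delta> < \<bar>\<psi>t t x\<bar>} = \<eta>" if "t \<ge> 0" for t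
        using mu_meas[of "{u. \<delta> < \<bar>u\<bar>}"] mu_meas_t[of "{u. \<delta> < \<bar>u\<bar>}" t] that
        unfolding \<eta>_def by simp
      have Mconv: "((\<lambda>t. prob {x \<in> space M. e < \<bar>Mt t x\<bar>}) \<longlongrightarrow> 0) at_top" if e: "e > 0" for e
      proof (rule tendsto_sandwich[where f="\<lambda>_. 0"])
        show "((\<lambda>_. 0::real) \<longlongrightarrow> 0) at_top" by simp
        show "\<forall>\<^sub>F t in at_top. 0 \<le> prob {x \<in> space M. e < \<bar>Mt t x\<bar>}" by simp
        have "((\<lambda>t. prob {x \<in> space M. e * \<delta> < \<bar>Q t x - \<psi> x\<bar>} / \<eta>) \<longlongrightarrow> 0 / \<eta>) at_top"
          using conv[of "e * \<delta>"] e \<delta> \<eta> by (intro tendsto_divide) auto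
        then show "((\<lambda>t. prob {x \<in> space M. e * \<delta> < \<bar>Q t x - \<psi> x\<bar>} / \<eta>) \<longlongrightarrow> 0) at_top"
          by simp
        show "\<forall>\<^sub>F t in at_top. prob {x \<in> space M. e < \<bar>Mt t x\<bar>}
               \<le> prob {x \<in> space M. e * \<delta> < \<bar>Q t x - \<psi> x\<bar>} / \<eta>"
          using eventually_ge_at_top[of "0::real"]
        proof eventually_elim
          case (elim t)
          have "{z \<in> space (borel \<Otimes>\<^sub>M borel). e < \<bar>snd (z::real\<times>real)\<bar>} \<in> sets (borel \<Otimes>\<^sub>M borel)"
            by measurable
          then have snd_meas: "{z::real\<times>real. e < \<bar>snd z\<bar>} \<in> sets (borel \<Otimes>\<^sub>M borel)" by (simp add: space_pair_measure)
          have "\<eta> * prob {x \<in> space M. e < \<bar>Mt t x\<bar>}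
              = prob {x\<in>space M. \<psi>t t x \<in> {u. \<delta> < \<bar>u\<bar>} \<and> (Q t x, Mt t x) \<in> {z. e < \<bar>snd z\<bar>}}"
            using indep_rv_events[OF assms(1) ind[OF elim], of "{u. \<delta> < \<bar>u\<bar>}" "{z. e < \<bar>snd z\<bar>}"]
              \<eta>t[OF elim] snd_meas by simp
          also have "\<dots> \<le> prob {x \<in> space M. e * \<delta> < \<bar>Q t x - \<psi> x\<bar>}"
          proof (rule finite_measure_mono_AE)
            show "{x \<in> space M. e * \<delta> < \<bar>Q t x - \<psi> x\<bar>} \<in> events"
              using Qm[OF elim] psim by measurable
            show "AE x in M. x \<in> {x\<in>space M. \<psi>t t x \<in> {u. \<delta> < \<bar>u\<bar>} \<and> (Q t x, Mt t x) \<in> {z. e < \<bar>snd z\<bar>}}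
                \<longrightarrow> x \<in> {x \<in> space M. e * \<delta> < \<bar>Q t x - \<psi> x\<bar>}"
              using eq[OF elim]
            proof eventually_elim
              case (elim x)
              show ?case
              proof
                assume x: "x \<in> {x\<in>space M. \<psi>t t x \<in> {u. \<delta> < \<bar>u\<bar>} \<and> (Q t x, Mt t x) \<in> {z. e < \<bar>snd z\<bar>}}"
                then have "e * \<delta> < \<bar>Mt t x\<bar> * \<bar>\<psi>t t x\<bar>"
                  using e \<delta> by (intro mult_strict_mono) auto
                also have "\<dots> = \<bar>Q t x - \<psi> x\<bar>" using elim by (simp add: abs_mult)
                finally show "x \<in> {x \<in> space M. e * \<delta> < \<bar>Q t x - \<psi> x\<bar>}" using x by simp
              qed
            qed
          qed
          finally show ?case using \<eta> by (simp add: field_simps)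
        qed
      qed
      obtain c where cmax: "\<And>a. measure \<mu> {a} \<le> measure \<mu> {c}"
        and Ffin: "finite {a. measure \<mu> {a} = measure \<mu> {c}}" and ppos: "measure \<mu> {c} > 0"
        using max_atom[OF mu.prob_space_axioms c0] unfolding \<mu>_def by auto
      define p where "p = measure \<mu> {c}"
      define F where "F = {a. measure \<mu> {a} = p}"
      define R where "R = 1 + (\<Sum>a\<in>F. \<bar>a\<bar>)"
      have R: "R > 0" unfolding R_def by (smt (verit) sum_nonneg abs_ge_zero)
      have FR: "\<bar>a\<bar> \<le> R" if "a \<in> F" for a
      proof -
        have "\<bar>a\<bar> \<le> (\<Sum>a\<in>F. \<bar>a\<bar>)" using Ffin that unfolding F_def p_def
          by (intro member_le_sum) auto
        then show ?thesis unfolding R_def by simp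
      qed
      have key: "AE x in M. (c - Q t x) / Mt t x \<in> F" if t: "t \<ge> 0" for t
      proof -
        define Z where "Z = (\<lambda>x. (Q t x, Mt t x))"
        define \<nu> where "\<nu> = distr M (borel \<Otimes>\<^sub>M borel) Z"
        have Zm: "Z \<in> measurable M (borel \<Otimes>\<^sub>M borel)" unfolding Z_def using Qm[OF t] Mm[OF t] by measurable
        interpret nu: prob_space \<nu> unfolding \<nu>_def using Zm by (rule prob_space_distr)
        have prod: "distr M ((borel \<Otimes>\<^sub>M borel) \<Otimes>\<^sub>M borel) (\<lambda>x. (Z x, \<psi>t t x)) = \<nu> \<Otimes>\<^sub>M \<mu>"
          using indep_rv_prod[OF assms(1) ind[OF t]] unfolding \<nu>_def Z_def \<mu>_def dist[OF t] .
        define E where "E = {w :: (real \<times> real) \<times> real. fst (fst w) + snd (fst w) * snd w = c}"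
        have Em: "E \<in> sets ((borel \<Otimes>\<^sub>M borel) \<Otimes>\<^sub>M borel)"
        proof -
          have "{w \<in> space ((borel \<Otimes>\<^sub>M borel) \<Otimes>\<^sub>M borel). fst (fst w) + snd (fst w) * snd w = (c::real)}
                 \<in> sets ((borel \<Otimes>\<^sub>M borel) \<Otimes>\<^sub>M borel)"
            by measurable
          then show ?thesis unfolding E_def by (simp add: space_pair_measure)
        qed
        have Em': "E \<in> sets (\<nu> \<Otimes>\<^sub>M \<mu>)" using Em unfolding \<nu>_def \<mu>_def
          by (simp cong: sets_pair_measure_cong)
        have pm: "(\<lambda>x. (Z x, \<psi>t t x)) \<in> measurable M ((borel \<Otimes>\<^sub>M borel) \<Otimes>\<^sub>M borel)"
          using Zm ptm[OF t] by measurable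
        have "ennreal p = emeasure M {x\<in>space M. \<psi> x = c}"
          using mu_meas[of "{c}"] by (simp add: p_def emeasure_eq_measure)
        also have "\<dots> = emeasure M ((\<lambda>x. (Z x, \<psi>t t x)) -` E \<inter> space M)"
        proof (rule emeasure_eq_AE)
          show "AE x in M. (x \<in> {x \<in> space M. \<psi> x = c}) = (x \<in> (\<lambda>x. (Z x, \<psi>t t x)) -` E \<inter> space M)"
            using eq[OF t] by eventually_elim (auto simp: E_def Z_def)
          show "{x \<in> space M. \<psi> x = c} \<in> events" using psim by measurable
          show "(\<lambda>x. (Z x, \<psi>t t x)) -` E \<inter> space M \<in> events" using pm Em by (rule measurable_sets)
        qed
        also have "\<dots> = emeasure (\<nu> \<Otimes>\<^sub>M \<mu>) E"
          unfolding prod[symmetric] using pm Em by (subst emeasure_distr) auto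
        also have "\<dots> = (\<integral>\<^sup>+z. emeasure \<mu> (Pair z -` E) \<partial>\<nu>)"
          by (rule mu.emeasure_pair_measure_alt[OF Em'])
        finally have h_int: "(\<integral>\<^sup>+z. emeasure \<mu> (Pair z -` E) \<partial>\<nu>) = ennreal p" by simp
        have hm: "(\<lambda>z. emeasure \<mu> (Pair z -` E)) \<in> borel_measurable \<nu>"
          by (rule mu.measurable_emeasure_Pair[OF Em'])
        have AEnz: "AE z in \<nu>. snd z \<noteq> 0"
          unfolding \<nu>_def using Mnz[OF t] Zm by (subst AE_distr_iff) (auto simp: Z_def)
        have sec: "Pair z -` E = {(c - fst z) / snd z}" if "snd z \<noteq> 0" for z
          using that by (auto simp: E_def field_simps)
        have hle: "AE z in \<nu>. emeasure \<mu> (Pair z -` E) \<le> ennreal p"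
          using AEnz by eventually_elim (simp add: sec mu.emeasure_eq_measure cmax p_def)
        have "(\<integral>\<^sup>+z. ennreal p - emeasure \<mu> (Pair z -` E) \<partial>\<nu>)
              = (\<integral>\<^sup>+z. ennreal p \<partial>\<nu>) - (\<integral>\<^sup>+z. emeasure \<mu> (Pair z -` E) \<partial>\<nu>)"
          using hm hle h_int by (intro nn_integral_diff) auto
        also have "\<dots> = 0" using h_int by (simp add: nu.emeasure_space_1)
        finally have "AE z in \<nu>. ennreal p - emeasure \<mu> (Pair z -` E) = 0"
          using hm by (subst (asm) nn_integral_0_iff_AE) auto
        then have "AE z in \<nu>. (c - fst z) / snd z \<in> F"
          using AEnz
        proof eventually_elim
          case (elim z)
          then have "ennreal p \<le> ennreal (measure \<mu> {(c - fst z) / snd z})"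
            by (simp add: sec mu.emeasure_eq_measure diff_eq_0_iff_ennreal)
          then have "p \<le> measure \<mu> {(c - fst z) / snd z}" by simp
          with cmax[of "(c - fst z) / snd z"] show ?case by (simp add: F_def p_def)
        qed
        from AE_distrD[OF Zm this[unfolded \<nu>_def]] show ?thesis by (simp add: Z_def)
      qed
      have Qc: "((\<lambda>t. prob {x \<in> space M. e < \<bar>Q t x - c\<bar>}) \<longlongrightarrow> 0) at_top" if e: "e > 0" for e
      proof (rule tendsto_sandwich[where f="\<lambda>_. 0"])
        show "((\<lambda>_. 0::real) \<longlongrightarrow> 0) at_top" by simp
        show "\<forall>\<^sub>F t in at_top. 0 \<le> prob {x \<in> space M. e < \<bar>Q t x - c\<bar>}" by simp
        show "((\<lambda>t. prob {x \<in> space M. e / R < \<bar>Mt t x\<bar>}) \<longlongrightarrow> 0) at_top" using Mconv e R by simp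
        show "\<forall>\<^sub>F t in at_top. prob {x \<in> space M. e < \<bar>Q t x - c\<bar>} \<le> prob {x \<in> space M. e / R < \<bar>Mt t x\<bar>}"
          using eventually_ge_at_top[of "0::real"]
        proof eventually_elim
          case (elim t)
          show ?case
          proof (rule finite_measure_mono_AE)
            show "{x \<in> space M. e / R < \<bar>Mt t x\<bar>} \<in> events" using Mm[OF elim] by measurable
            show "AE x in M. x \<in> {x \<in> space M. e < \<bar>Q t x - c\<bar>} \<longrightarrow> x \<in> {x \<in> space M. e / R < \<bar>Mt t x\<bar>}"
              using key[OF elim] Mnz[OF elim]
            proof eventually_elim
              case (elim x)
              have "\<bar>c - Q t x\<bar> = \<bar>Mt t x\<bar> * \<bar>(c - Q t x) / Mt t x\<bar>" using elim by (simp add: abs_divide)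
              also have "\<dots> \<le> \<bar>Mt t x\<bar> * R" using FR[OF elim(1)] by (intro mult_left_mono) auto
              finally have "\<bar>Q t x - c\<bar> \<le> R * \<bar>Mt t x\<bar>" by (simp add: abs_minus_commute mult.commute)
              then show ?case using R by (auto simp: pos_divide_less_eq mult.commute)
            qed
          qed
        qed
      qed
      have "AE x in M. \<psi> x - c = 0"
      proof (rule AE_zero_small[OF assms(1)])
        show "(\<lambda>x. \<psi> x - c) \<in> borel_measurable M" using psim by measurable
        fix e :: real assume e: "e > 0"
        define g where "g t = prob {x \<in> space M. e/2 < \<bar>Q t x - \<psi> x\<bar>} + prob {x \<in> space M. e/2 < \<bar>Q t x - c\<bar>}" for t
        have glim: "(g \<longlongrightarrow> 0 + 0) at_top" unfolding g_def using conv[of "e/2"] Qc[of "e/2"] e by (intro tendsto_add) auto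
        have gev: "\<forall>\<^sub>F t in at_top. prob {x \<in> space M. e < \<bar>\<psi> x - c\<bar>} \<le> g t"
          using eventually_ge_at_top[of "0::real"]
        proof eventually_elim
          case (elim t)
          have s1: "{x \<in> space M. e/2 < \<bar>Q t x - \<psi> x\<bar>} \<in> events" using Qm[OF elim] psim by measurable
          have s2: "{x \<in> space M. e/2 < \<bar>Q t x - c\<bar>} \<in> events" using Qm[OF elim] by measurable
          have incl: "{x \<in> space M. e < \<bar>\<psi> x - c\<bar>} \<subseteq> {x \<in> space M. e/2 < \<bar>Q t x - \<psi> x\<bar>} \<union> {x \<in> space M. e/2 < \<bar>Q t x - c\<bar>}"
          proof
            fix x assume x: "x \<in> {x \<in> space M. e < \<bar>\<psi> x - c\<bar>}"
            show "x \<in> {x \<in> space M. e/2 < \<bar>Q t x - \<psi> x\<bar>} \<union> {x \<in> space M. e/2 < \<bar>Q t x - c\<bar>}"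
            proof (rule ccontr)
              assume "x \<notin> {x \<in> space M. e/2 < \<bar>Q t x - \<psi> x\<bar>} \<union> {x \<in> space M. e/2 < \<bar>Q t x - c\<bar>}"
              then have a: "\<bar>Q t x - \<psi> x\<bar> \<le> e/2" "\<bar>Q t x - c\<bar> \<le> e/2" using x by auto
              from x have "e < \<bar>\<psi> x - c\<bar>" by simp
              with a show False by arith
            qed
          qed
          have "prob {x \<in> space M. e < \<bar>\<psi> x - c\<bar>} \<le> prob ({x \<in> space M. e/2 < \<bar>Q t x - \<psi> x\<bar>} \<union> {x \<in> space M. e/2 < \<bar>Q t x - c\<bar>})"
            using incl s1 s2 by (intro finite_measure_mono) auto
          also have "\<dots> \<le> g t" unfolding g_def using s1 s2 by (intro measure_subadditive) (auto simp: emeasure_eq_measure)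
          finally show ?case .
        qed
        have "prob {x \<in> space M. e < \<bar>\<psi> x - c\<bar>} \<le> 0 + 0"
          by (rule tendsto_le[OF trivial_limit_at_top_linorder glim tendsto_const gev])
        then show "prob {x \<in> space M. e < \<bar>\<psi> x - c\<bar>} = 0" using measure_nonneg by (simp add: antisym)
      qed
      then show ?thesis by auto
    qed
  qed
qed

end
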